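(* Let a single bidder have a valuation with a continuously differentiable, positive density $f$ on $[0,1]$ and cdf $F$, satisfying the monotone hazard rate condition, i.e. $(1-F(r))/f(r)$ is non-increasing in $r$. For $r\in[0,1]$ let $x(r)=\int_r^1 v f(v)\,dv$ and $y(r)=r\int_r^1 f(v)\,dv$ (the welfare and revenue of the take-it-or-leave-it price $r$). Then for all $r\in(0,1)$, $$x'(r)\,y''(r)-y'(r)\,x''(r)\ \ge\ 0,$$ i.e. the curve $r\mapsto (x(r),y(r))$ (the set of (welfare, revenue) points of all single-bidder deterministic mechanisms) is locally convex.
   Context: For a single bidder, every deterministic truthful mechanism is a posted price $r$: the bidder gets the item and pays $r$ iff her value is at least $r$. *)

theory Defs
  imports "HOL-Analysis.Analysis"
begin

definition cdf :: "(real \<Rightarrow> real) \<Rightarrow> real \<Rightarrow> real" where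
  "cdf f r = integral {0..r} f"

definition welfare :: "(real \<Rightarrow> real) \<Rightarrow> real \<Rightarrow> real" where
  "welfare f r = integral {r..1} (\<lambda>v. v * f v)"

definition revenue :: "(real \<Rightarrow> real) \<Rightarrow> real \<Rightarrow> real" where
  "revenue f r = r * integral {r..1} f"

end

theory Submission
  imports Defs
begin

theorem proposition1:
  fixes f f' :: "real \<Rightarrow> real"
  assumes deriv_f: "\<And>v. v \<in> {0..1} \<Longrightarrow> (f has_real_derivative f' v) (at v within {0..1})"
    and cont_f': "continuous_on {0..1} f'"
    and pos: "\<And>v. v \<in> {0..1} \<Longrightarrow> f v > 0"
    and density: "integral {0..1} f = 1"
    and mhr: "\<And>a b. 0 \<le> a \<Longrightarrow> a \<le> b \<Longrightarrow> b \<le> 1 \<Longrightarrow>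
                (1 - cdf f b) / f b \<le> (1 - cdf f a) / f a"
    and r: "r \<in> {0<..<1}"
  shows "deriv (welfare f) r * deriv (deriv (revenue f)) r
           - deriv (revenue f) r * deriv (deriv (welfare f)) r \<ge> 0"
proof -
  have fcont: "continuous_on {0..1} f"
    unfolding continuous_on_eq_continuous_within
    using deriv_f DERIV_continuous by blast
  have vfcont: "continuous_on {0..1} (\<lambda>v. v * f v)"
    by (intro continuous_intros fcont)
  have fd: "(f has_real_derivative f' s) (at s)" if "s \<in> {0<..<1}" for s
    using deriv_f[of s] that at_within_Icc_at[of 0 s 1] by auto
  define G where "G s = integral {s..1} f" for s
  have Gd: "(G has_real_derivative - f s) (at s)" if "s \<in> {0<..<1}" for s
  proof -
    have "(G has_real_derivative - f s) (at s within {0..1})"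
      unfolding G_def has_real_derivative_iff_has_vector_derivative
      using integral_has_vector_derivative'[OF fcont, of s] that by auto
    thus ?thesis using that at_within_Icc_at[of 0 s 1] by auto
  qed
  have Wd: "(welfare f has_real_derivative - (s * f s)) (at s)" if "s \<in> {0<..<1}" for s
  proof -
    have "(welfare f has_real_derivative - (s * f s)) (at s within {0..1})"
      unfolding welfare_def has_real_derivative_iff_has_vector_derivative
      using integral_has_vector_derivative'[OF vfcont, of s] that by auto
    thus ?thesis using that at_within_Icc_at[of 0 s 1] by auto
  qed
  have Rd: "(revenue f has_real_derivative G s - s * f s) (at s)" if "s \<in> {0<..<1}" for s
  proof -
    have "((\<lambda>s. s * G s) has_real_derivative 1 * G s + s * (- f s)) (at s)"
      using DERIV_mult[OF DERIV_ident Gd[OF that]] by (simp add: algebra_simps)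
    moreover have "revenue f = (\<lambda>s. s * G s)" unfolding revenue_def G_def by auto
    ultimately show ?thesis by (simp add: algebra_simps)
  qed
  have dW: "deriv (welfare f) s = - (s * f s)" if "s \<in> {0<..<1}" for s
    using Wd[OF that] DERIV_imp_deriv by blast
  have dR: "deriv (revenue f) s = G s - s * f s" if "s \<in> {0<..<1}" for s
    using Rd[OF that] DERIV_imp_deriv by blast
  have "((\<lambda>s. - (s * f s)) has_real_derivative - (1 * f r + r * f' r)) (at r)"
    using DERIV_minus[OF DERIV_mult[OF DERIV_ident fd[OF r]]] by (simp add: algebra_simps)
  hence "(deriv (welfare f) has_real_derivative - (1 * f r + r * f' r)) (at r)"
    by (rule has_field_derivative_transform_within_open[where S="{0<..<1}"])
       (use r dW in auto)
  hence ddW: "deriv (deriv (welfare f)) r = - (f r + r * f' r)"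
    using DERIV_imp_deriv by fastforce
  have "((\<lambda>s. G s - s * f s) has_real_derivative - f r - (1 * f r + r * f' r)) (at r)"
    using DERIV_diff[OF Gd[OF r] DERIV_mult[OF DERIV_ident fd[OF r]]] by (simp add: algebra_simps)
  hence "(deriv (revenue f) has_real_derivative - f r - (1 * f r + r * f' r)) (at r)"
    by (rule has_field_derivative_transform_within_open[where S="{0<..<1}"])
       (use r dR in auto)
  hence ddR: "deriv (deriv (revenue f)) r = - 2 * f r - r * f' r"
    using DERIV_imp_deriv by fastforce
  have fint: "f integrable_on {0..1}"
    using fcont integrable_continuous_interval by blast
  have Geq: "1 - cdf f r = G r"
  proof -
    have "integral {0..r} f + integral {r..1} f = integral {0..1} f"
      using r fint Henstock_Kurzweil_Integration.integral_combine[where a=0 and c=r and b=1 and f=f] by auto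
    thus ?thesis unfolding cdf_def G_def using density by simp
  qed
  have Gnn: "G r \<ge> 0"
    unfolding G_def using pos r integrable_on_subinterval[OF fint, of r 1]
    by (intro integral_nonneg) (auto simp: less_imp_le)
  have fr: "f r > 0" using pos r by auto
  \<comment> \<open>MHR gives f^2 + G f' \<ge> 0\<close>
  have cdfd: "(cdf f has_real_derivative f r) (at r)"
  proof -
    have "(cdf f has_real_derivative f r) (at r within {0..1})"
      unfolding cdf_def has_real_derivative_iff_has_vector_derivative
      using integral_has_vector_derivative[OF fcont, of r] r by auto
    thus ?thesis using r at_within_Icc_at[of 0 r 1] by auto
  qed
  define h where "h s = (1 - cdf f s) / f s" for s
  have hd: "(h has_real_derivative ((- f r) * f r - (1 - cdf f r) * f' r) / (f r * f r)) (at r)"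
    unfolding h_def
    using DERIV_divide[OF DERIV_diff[OF DERIV_const[of 1] cdfd] fd[OF r]] fr
    by (simp add: algebra_simps power2_eq_square)
  have key: "f r * f r + G r * f' r \<ge> 0"
  proof (rule ccontr)
    assume "\<not> ?thesis"
    hence neg: "f r * f r + G r * f' r < 0" by simp
    have "((- f r) * f r - (1 - cdf f r) * f' r) / (f r * f r) > 0"
      using neg fr Geq by (intro divide_pos_pos) auto
    from DERIV_pos_inc_right[OF hd this] obtain d where d: "d > 0"
      "\<And>k. k > 0 \<Longrightarrow> k < d \<Longrightarrow> h r < h (r + k)" by blast
    define k where "k = min (d/2) ((1 - r)/2)"
    have k: "k > 0" "k < d" "r + k \<le> 1" using d r unfolding k_def by (auto simp: min_def field_simps)
    have "h (r + k) \<le> h r" unfolding h_def using mhr[of r "r + k"] r k by auto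
    with d(2)[OF k(1,2)] show False by simp
  qed
  have "deriv (welfare f) r * deriv (deriv (revenue f)) r
           - deriv (revenue f) r * deriv (deriv (welfare f)) r
        = r * (f r * f r + G r * f' r) + G r * f r"
    unfolding dW[OF r] dR[OF r] ddW ddR by (simp add: algebra_simps)
  also have "\<dots> \<ge> 0"
  proof -
    have "r * (f r * f r + G r * f' r) \<ge> 0" using key r by simp
    moreover have "G r * f r \<ge> 0" using Gnn fr by simp
    ultimately show ?thesis by linarith
  qed
  finally show ?thesis .
qed

end
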